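(* Let $\mathcal{T}_H$ be a partition of the box $\Omega\subset\mathbb{R}^3$ into axis-parallel rectangular boxes and let $\mathcal{T}_h$ be its uniform refinement (each box of $\mathcal{T}_H$ split into $8$ congruent boxes). Let $E$ be an interior edge of $\mathcal{T}_H$ parallel to the $x_1$-axis, let $T_E^1,\dots,T_E^4\in\mathcal{T}_H$ be the four coarse elements sharing $E$, put $D=\bigcup_{i=1}^4 T_E^i$, and let $v$ be the midpoint of $E$ (a vertex of $\mathcal{T}_h$). Let $e_1,\dots,e_6$ be the six edges of $\mathcal{T}_h$ having $v$ as an endpoint, where $e_{2i-1},e_{2i}$ are parallel to the $x_i$-axis ($i=1,2,3$). For each $i$ fix the tangential direction $\mathbf{t}_{x_i}$ of all fine edges parallel to the $x_i$-axis, oriented so that $v$ is the terminal endpoint of $e_{2i-1}$ (and the initial endpoint of $e_{2i}$). Let $\mathbf{u}\in N_h(D)$ (the lowest order hexahedral Nédélec space on the fine elements contained in $D$) satisfy: (i) $\mathbf{u}\cdot\mathbf{t}_{x_i}=-1$ on $e_{2i-1}$ and $\mathbf{u}\cdot\mathbf{t}_{x_i}=1$ on $e_{2i}$ for $i=1,2,3$; (ii) the tangential component of $\mathbf{u}$ vanishes on every other fine edge lying on $\bigcup_{i=1}^4\partial T_E^i$; (iii) for each $i=1,\dots,4$, $\int_{T_E^i}\mathbf{u}\cdot\mathbf{w}\,d\mathbf{x}=0$ for all $\mathbf{w}\in N_h^{T_E^i}$. Then $\nabla\times\mathbf{u}$ does not vanish identically.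
   Context: The lowest order Nédélec space on a set of axis-parallel boxes consists of vector fields in $H(\mathbf{curl})$ whose restriction to each box $T$ is of the form $(a_1+a_2x_2+a_3x_3+a_4x_2x_3,\; b_1+b_2x_3+b_3x_1+b_4x_3x_1,\; c_1+c_2x_1+c_3x_2+c_4x_1x_2)$; on each fine edge $e$ the tangential component $\mathbf{u}\cdot\mathbf{t}_e$ is constant, and these twelve edge values per box determine the field. For $T\in\mathcal{T}_H$, $N_h^T$ denotes the set of fields of the fine Nédélec space that vanish outside $T$ (equivalently, whose tangential components vanish on all fine edges not lying in the interior of $T$). *)

theory Defs
  imports "HOL-Analysis.Analysis"
begin

text \<open>Coarse breakpoints along axis m are cb m 0 < cb m 1 < ... ; the uniform refinement
  inserts midpoints.\<close>
definition refine :: "(nat \<Rightarrow> real) \<Rightarrow> nat \<Rightarrow> real" where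
  "refine c n = (if even n then c (n div 2) else (c (n div 2) + c (n div 2 + 1)) / 2)"

definition gvert :: "(3 \<Rightarrow> nat \<Rightarrow> real) \<Rightarrow> (3 \<Rightarrow> nat) \<Rightarrow> real^3" where
  "gvert G nu = (\<chi> m. G m (nu m))"

definition upper_idx :: "(3 \<Rightarrow> nat) \<Rightarrow> (3 \<Rightarrow> nat)" where
  "upper_idx nu = (\<lambda>m. Suc (nu m))"

definition gcell :: "(3 \<Rightarrow> nat \<Rightarrow> real) \<Rightarrow> (3 \<Rightarrow> nat) \<Rightarrow> (real^3) set" where
  "gcell G nu = cbox (gvert G nu) (gvert G (upper_idx nu))"

definition gcell_open :: "(3 \<Rightarrow> nat \<Rightarrow> real) \<Rightarrow> (3 \<Rightarrow> nat) \<Rightarrow> (real^3) set" where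
  "gcell_open G nu = box (gvert G nu) (gvert G (upper_idx nu))"

definition cell_idx :: "(3 \<Rightarrow> nat) \<Rightarrow> (3 \<Rightarrow> nat) set" where
  "cell_idx Nn = {nu. \<forall>m. nu m < Nn m}"

definition gedge :: "(3 \<Rightarrow> nat \<Rightarrow> real) \<Rightarrow> (3 \<Rightarrow> nat) \<Rightarrow> 3 \<Rightarrow> (real^3) set" where
  "gedge G nu n = closed_segment (gvert G nu) (gvert G (nu(n := Suc (nu n))))"

definition edge_idx :: "(3 \<Rightarrow> nat) \<Rightarrow> ((3 \<Rightarrow> nat) \<times> 3) set" where
  "edge_idx Nn = {(nu, n). nu n < Nn n \<and> (\<forall>m. nu m \<le> Nn m)}"

definition ned_poly :: "(real^3 \<Rightarrow> real^3) \<Rightarrow> bool" where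
  "ned_poly f \<longleftrightarrow> (\<exists>a1 a2 a3 a4 b1 b2 b3 b4 c1 c2 c3 c4 :: real. \<forall>x.
     f x = vector [a1 + a2 * x$2 + a3 * x$3 + a4 * x$2 * x$3,
                   b1 + b2 * x$3 + b3 * x$1 + b4 * x$3 * x$1,
                   c1 + c2 * x$1 + c3 * x$2 + c4 * x$1 * x$2])"

text \<open>u belongs to the Nedelec space on the grid (G, Nn), with local polynomial
  representatives p nu on the cells: on each open cell u is of Nedelec form, and
  the tangential components of neighbouring cells agree on common faces
  (H(curl)-conformity).\<close>
definition ned_rep :: "(3 \<Rightarrow> nat \<Rightarrow> real) \<Rightarrow> (3 \<Rightarrow> nat) \<Rightarrow>
    ((3 \<Rightarrow> nat) \<Rightarrow> real^3 \<Rightarrow> real^3) \<Rightarrow> (real^3 \<Rightarrow> real^3) \<Rightarrow> bool" where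
  "ned_rep G Nn p u \<longleftrightarrow>
     (\<forall>nu \<in> cell_idx Nn. ned_poly (p nu) \<and> (\<forall>x \<in> gcell_open G nu. u x = p nu x)) \<and>
     (\<forall>nu \<in> cell_idx Nn. \<forall>mu \<in> cell_idx Nn. \<forall>m. mu = nu(m := Suc (nu m)) \<longrightarrow>
        (\<forall>x \<in> gcell G nu \<inter> gcell G mu. \<forall>n. n \<noteq> m \<longrightarrow> p nu x $ n = p mu x $ n))"

definition pderiv3 :: "(real^3 \<Rightarrow> real^3) \<Rightarrow> 3 \<Rightarrow> 3 \<Rightarrow> real^3 \<Rightarrow> real" where
  "pderiv3 u i j x = deriv (\<lambda>t. u (x + t *\<^sub>R axis j 1) $ i) 0"

definition curl3 :: "(real^3 \<Rightarrow> real^3) \<Rightarrow> real^3 \<Rightarrow> real^3" where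
  "curl3 u x = vector [pderiv3 u 3 2 x - pderiv3 u 2 3 x,
                       pderiv3 u 1 3 x - pderiv3 u 3 1 x,
                       pderiv3 u 2 1 x - pderiv3 u 1 2 x]"

text \<open>Number of coarse cells along each axis in D: one along x1 (the edge E spans it),
  two along x2 and x3 (the four coarse elements around E).\<close>
definition ncD :: "3 \<Rightarrow> nat" where
  "ncD m = (if m = 1 then 1 else 2)"

definition nfD :: "3 \<Rightarrow> nat" where
  "nfD m = 2 * ncD m"

text \<open>Multi-index (fine grid) of the midpoint v of E.\<close>
definition vidx :: "3 \<Rightarrow> nat" where
  "vidx m = (if m = 1 then 1 else 2)"

definition coarse_of :: "(3 \<Rightarrow> nat) \<Rightarrow> (3 \<Rightarrow> nat)" where
  "coarse_of nu = (\<lambda>m. nu m div 2)"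

definition tdir :: "(3 \<Rightarrow> bool) \<Rightarrow> 3 \<Rightarrow> real^3" where
  "tdir pos i = (if pos i then axis i 1 else - axis i 1)"

text \<open>Fine edges at v parallel to axis i: e_{2i-1} (v is its terminal endpoint w.r.t. t)
  and e_{2i} (v is its initial endpoint), as (vertex index, axis) pairs.\<close>
definition e_in :: "(3 \<Rightarrow> bool) \<Rightarrow> 3 \<Rightarrow> (3 \<Rightarrow> nat) \<times> 3" where
  "e_in pos i = (if pos i then (vidx(i := vidx i - 1), i) else (vidx, i))"

definition e_out :: "(3 \<Rightarrow> bool) \<Rightarrow> 3 \<Rightarrow> (3 \<Rightarrow> nat) \<times> 3" where
  "e_out pos i = (if pos i then (vidx, i) else (vidx(i := vidx i - 1), i))"

definition tang_on_edge :: "(3 \<Rightarrow> nat \<Rightarrow> real) \<Rightarrow> (3 \<Rightarrow> nat) \<Rightarrow>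
    ((3 \<Rightarrow> nat) \<Rightarrow> real^3 \<Rightarrow> real^3) \<Rightarrow> real^3 \<Rightarrow> (3 \<Rightarrow> nat) \<times> 3 \<Rightarrow> real \<Rightarrow> bool" where
  "tang_on_edge G Nn p t e c \<longleftrightarrow>
     (\<forall>mu \<in> cell_idx Nn. gedge G (fst e) (snd e) \<subseteq> gcell G mu \<longrightarrow>
        (\<forall>x \<in> gedge G (fst e) (snd e). p mu x \<bullet> t = c))"

text \<open>Membership of w (with representatives q) in N_h^T for the coarse element T_kappa:
  a fine Nedelec field on D vanishing outside T_kappa whose tangential components vanish
  on the boundary of T_kappa (so that its extension by zero is H(curl)-conforming).\<close>
definition in_NhT :: "(3 \<Rightarrow> nat \<Rightarrow> real) \<Rightarrow> (3 \<Rightarrow> nat) \<Rightarrow> (3 \<Rightarrow> nat) \<Rightarrow>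
    ((3 \<Rightarrow> nat) \<Rightarrow> real^3 \<Rightarrow> real^3) \<Rightarrow> (real^3 \<Rightarrow> real^3) \<Rightarrow> bool" where
  "in_NhT cb Nn kappa q w \<longleftrightarrow>
     ned_rep (\<lambda>m. refine (cb m)) Nn q w \<and>
     (\<forall>nu \<in> cell_idx Nn. coarse_of nu \<noteq> kappa \<longrightarrow> q nu = (\<lambda>_. 0)) \<and>
     (\<forall>nu \<in> cell_idx Nn. coarse_of nu = kappa \<longrightarrow>
        (\<forall>m. \<forall>x \<in> gcell (\<lambda>m. refine (cb m)) nu.
           (x $ m = cb m (kappa m) \<or> x $ m = cb m (Suc (kappa m))) \<longrightarrow>
           (\<forall>n. n \<noteq> m \<longrightarrow> q nu x $ n = 0)))"

end

theory Submission
  imports Defs "HOL-Analysis.Equivalence_Lebesgue_Henstock_Integration"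
begin

definition idx :: "nat \<Rightarrow> nat \<Rightarrow> nat \<Rightarrow> (3 \<Rightarrow> nat)" where
  "idx a b c = (\<lambda>m. if m = 1 then a else if m = 2 then b else c)"

lemma idx_simps[simp]: "idx a b c 1 = a" "idx a b c 2 = b" "idx a b c 3 = c"
  by (auto simp: idx_def)

lemma fun3_eq: "(f::3\<Rightarrow>'a) = g \<longleftrightarrow> f 1 = g 1 \<and> f 2 = g 2 \<and> f 3 = g 3"
proof (intro iffI ext)
  fix x :: 3 assume "f 1 = g 1 \<and> f 2 = g 2 \<and> f 3 = g 3"
  then show "f x = g x" using exhaust_3[of x] by auto
qed auto

lemma vec3_eq: "(f::real^3) = g \<longleftrightarrow> f$1 = g$1 \<and> f$2 = g$2 \<and> f$3 = g$3"
proof (intro iffI)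
  assume a: "f$1 = g$1 \<and> f$2 = g$2 \<and> f$3 = g$3"
  show "f = g" unfolding vec_eq_iff
  proof
    fix x :: 3 show "f$x = g$x" using exhaust_3[of x] a by auto
  qed
qed auto

lemma ncD_simps[simp]: "ncD 1 = 1" "ncD 2 = 2" "ncD 3 = 2" by (auto simp: ncD_def)
lemma nfD_simps[simp]: "nfD 1 = 2" "nfD 2 = 4" "nfD 3 = 4" by (auto simp: nfD_def)
lemma vidx_simps[simp]: "vidx 1 = 1" "vidx 2 = 2" "vidx 3 = 2" by (auto simp: vidx_def)

lemma refine_even: "refine c (2*q) = c q" by (simp add: refine_def)
lemma refine_odd: "refine c (2*q+1) = (c q + c (Suc q))/2" by (simp add: refine_def)

lemma refine_vals[simp]: "refine c 0 = c 0" "refine c 1 = (c 0 + c 1)/2" "refine c 2 = c 1"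
  "refine c 3 = (c 1 + c 2)/2" "refine c 4 = c 2"
  using refine_even[of c 0] refine_odd[of c 0] refine_even[of c 1] refine_odd[of c 1] refine_even[of c 2]
  by (simp_all add: eval_nat_numeral)

lemma refine_mid: "refine c 2 - refine c 1 = refine c 1 - refine c 0"
  by (simp only: refine_vals) (simp add: field_simps)

lemma gvert_comp[simp]: "gvert G nu $ m = G m (nu m)" by (simp add: gvert_def)

lemma pderiv_poly:
  fixes S :: "(real^3) set" and P u :: "real^3 \<Rightarrow> real^3"
  assumes S: "open S" "x \<in> S" and eq: "\<And>y. y \<in> S \<Longrightarrow> u y = P y"
  and P: "\<And>y. P y = vector [a1 + a2 * y$2 + a3 * y$3 + a4 * y$2 * y$3,
                   b1 + b2 * y$3 + b3 * y$1 + b4 * y$3 * y$1,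
                   c1 + c2 * y$1 + c3 * y$2 + c4 * y$1 * y$2]"
  shows "pderiv3 u 3 2 x = c3 + c4 * x$1" "pderiv3 u 2 3 x = b2 + b4 * x$1"
proof -
  have ev: "\<forall>\<^sub>F t in nhds 0. x + t *\<^sub>R axis j 1 \<in> S" for j
  proof -
    have "isCont (\<lambda>t::real. x + t *\<^sub>R axis j 1) 0" by (intro continuous_intros)
    then have "((\<lambda>t::real. x + t *\<^sub>R axis j 1) \<longlongrightarrow> x) (at 0)" by (simp add: isCont_def)
    then have "\<forall>\<^sub>F t in at 0. x + t *\<^sub>R axis j 1 \<in> S" using S by (rule topological_tendstoD)
    then show ?thesis using S by (simp add: eventually_nhds_conv_at)
  qed
  have "pderiv3 u 3 2 x = deriv (\<lambda>t. c1 + c2 * x$1 + c3 * (x$2 + t) + c4 * x$1 * (x$2 + t)) 0"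
    unfolding pderiv3_def
  proof (rule deriv_cong_ev[OF _ refl])
    show "\<forall>\<^sub>F t in nhds 0. u (x + t *\<^sub>R axis 2 1) $ 3 = c1 + c2 * x$1 + c3 * (x$2 + t) + c4 * x$1 * (x$2 + t)"
      using ev[of 2] by eventually_elim (simp add: eq P axis_def)
  qed
  also have "\<dots> = c3 + c4 * x$1" by (rule DERIV_imp_deriv) (auto intro!: derivative_eq_intros)
  finally show "pderiv3 u 3 2 x = c3 + c4 * x$1" .
  have "pderiv3 u 2 3 x = deriv (\<lambda>t. b1 + b2 * (x$3 + t) + b3 * x$1 + b4 * (x$3 + t) * x$1) 0"
    unfolding pderiv3_def
  proof (rule deriv_cong_ev[OF _ refl])
    show "\<forall>\<^sub>F t in nhds 0. u (x + t *\<^sub>R axis 3 1) $ 2 = b1 + b2 * (x$3 + t) + b3 * x$1 + b4 * (x$3 + t) * x$1"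
      using ev[of 3] by eventually_elim (simp add: eq P axis_def)
  qed
  also have "\<dots> = b2 + b4 * x$1" by (rule DERIV_imp_deriv) (auto intro!: derivative_eq_intros)
  finally show "pderiv3 u 2 3 x = b2 + b4 * x$1" .
qed

lemma range_e:
  assumes "(nu, n) \<in> range (e_in pos) \<union> range (e_out pos)"
  shows "nu = vidx \<or> nu = vidx(n := vidx n - 1)"
  using assms by (auto simp: e_in_def e_out_def split: if_splits)

definition N :: "(nat \<Rightarrow> real) \<Rightarrow> nat \<Rightarrow> nat \<Rightarrow> real \<Rightarrow> real" where
  "N c i a t = (if a = i then (c (Suc i) - t) / (c (Suc i) - c i) else (t - c i) / (c (Suc i) - c i))"

lemma interp2:
  fixes P :: "real^3 \<Rightarrow> real^3"
  assumes P: "ned_poly P" and ab: "a1 < b1" "a3 < b3"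
    and z: "z00$1 = a1" "z00$3 = a3" "z10$1 = b1" "z10$3 = a3" "z01$1 = a1" "z01$3 = b3" "z11$1 = b1" "z11$3 = b3"
  shows "P y $ 2 = P z00 $ 2 * ((b1 - y$1)/(b1-a1)) * ((b3 - y$3)/(b3-a3))
     + P z10 $ 2 * ((y$1 - a1)/(b1-a1)) * ((b3 - y$3)/(b3-a3))
     + P z01 $ 2 * ((b1 - y$1)/(b1-a1)) * ((y$3 - a3)/(b3-a3))
     + P z11 $ 2 * ((y$1 - a1)/(b1-a1)) * ((y$3 - a3)/(b3-a3))"
proof -
  obtain a1' a2 a3' a4 c1 c2 b3' b4 d1 d2 d3 d4 :: real where
    Pf: "\<And>x. P x = vector [a1' + a2 * x$2 + a3' * x$3 + a4 * x$2 * x$3,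
                   c1 + c2 * x$3 + b3' * x$1 + b4 * x$3 * x$1,
                   d1 + d2 * x$1 + d3 * x$2 + d4 * x$1 * x$2]"
    using P unfolding ned_poly_def by blast
  have n1: "b1 - a1 \<noteq> 0" "b3 - a3 \<noteq> 0" using ab by auto
  define s where "s = (y$1 - a1)/(b1-a1)"
  define r where "r = (y$3 - a3)/(b3-a3)"
  have e: "(y$1 - a1)/(b1-a1) = s" "(y$3 - a3)/(b3-a3) = r"
    "(b1 - y$1)/(b1-a1) = 1 - s" "(b3 - y$3)/(b3-a3) = 1 - r"
    using n1 by (simp_all add: s_def r_def field_simps)
  have y: "y$1 = a1 + s*(b1-a1)" "y$3 = a3 + r*(b3-a3)"
    using n1 by (simp_all add: s_def r_def field_simps)
  show ?thesis unfolding e unfolding Pf using z by (simp add: y) (simp add: algebra_simps)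
qed

lemma int_split:
  fixes g :: "'i \<Rightarrow> real^3 \<Rightarrow> real"
  assumes I: "finite I" and sub: "\<And>i. i \<in> I \<Longrightarrow> box (lo i) (hi i) \<subseteq> T"
    and c: "\<And>i. i \<in> I \<Longrightarrow> continuous_on (cbox (lo i) (hi i)) (g i)"
  shows "integral T (\<lambda>x. \<Sum>i\<in>I. if x \<in> box (lo i) (hi i) then g i x else 0)
       = (\<Sum>i\<in>I. integral (cbox (lo i) (hi i)) (g i))"
proof -
  have int: "(\<lambda>x. if x \<in> box (lo i) (hi i) then g i x else 0) integrable_on T" if "i \<in> I" for i
  proof -
    have "g i integrable_on box (lo i) (hi i)"
      using integrable_continuous[OF c[OF that]] integrable_on_open_interval by blast
    moreover have "box (lo i) (hi i) \<inter> T = box (lo i) (hi i)" using sub[OF that] by blast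
    ultimately show ?thesis by (simp add: integrable_restrict_Int)
  qed
  have "integral T (\<lambda>x. \<Sum>i\<in>I. if x \<in> box (lo i) (hi i) then g i x else 0)
     = (\<Sum>i\<in>I. integral T (\<lambda>x. if x \<in> box (lo i) (hi i) then g i x else 0))"
    by (rule integral_sum[OF I int])
  also have "\<dots> = (\<Sum>i\<in>I. integral (cbox (lo i) (hi i)) (g i))"
  proof (rule sum.cong[OF refl])
    fix i assume i: "i \<in> I"
    have "box (lo i) (hi i) \<inter> T = box (lo i) (hi i)" using sub[OF i] by blast
    then show "integral T (\<lambda>x. if x \<in> box (lo i) (hi i) then g i x else 0) = integral (cbox (lo i) (hi i)) (g i)"
      by (simp add: integral_restrict_Int integral_open_interval)
  qed
  finally show ?thesis .
qed

lemma sum_int_zero: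
  fixes h :: "'i \<Rightarrow> real^3 \<Rightarrow> real"
  assumes I: "finite I" and c: "\<And>i. i \<in> I \<Longrightarrow> continuous_on (cbox (lo i) (hi i)) (h i)"
    and nn: "\<And>i x. i \<in> I \<Longrightarrow> x \<in> cbox (lo i) (hi i) \<Longrightarrow> 0 \<le> h i x"
    and s0: "(\<Sum>i\<in>I. integral (cbox (lo i) (hi i)) (h i)) = 0"
    and i0: "i0 \<in> I" and ne: "box (lo i0) (hi i0) \<noteq> {}" and x0: "x0 \<in> cbox (lo i0) (hi i0)"
  shows "h i0 x0 = 0"
proof -
  have "\<forall>i\<in>I. integral (cbox (lo i) (hi i)) (h i) = 0"
    using s0 sum_nonneg_eq_0_iff[OF I, of "\<lambda>i. integral (cbox (lo i) (hi i)) (h i)"]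
      integral_nonneg[OF integrable_continuous[OF c] nn] by blast
  then have "integral (cbox (lo i0) (hi i0)) (h i0) = 0" using i0 by blast
  then show ?thesis using integral_cbox_eq_0_iff[OF c[OF i0] ne] nn[OF i0] x0 by blast
qed

lemma lin2:
  fixes c3 c4 b2 b4 t1 t2 :: real
  assumes "c3 + c4*t1 = b2 + b4*t1" "c3 + c4*t2 = b2 + b4*t2" "t1 \<noteq> t2"
  shows "c3 = b2" "c4 = b4"
proof -
  have "(c4-b4)*(t1-t2) = (c3 + c4*t1 - (b2 + b4*t1)) - (c3 + c4*t2 - (b2+b4*t2))" by (simp add: algebra_simps)
  then have "(c4-b4)*(t1-t2) = 0" using assms by simp
  then show "c4 = b4" using assms(3) by simp
  then show "c3 = b2" using assms(1) by simp
qed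

lemma N_lin: "N c i a t = N c i a 0 + (N c i a 1 - N c i a 0) * t"
  by (cases "c (Suc i) = c i") (auto simp: N_def field_simps)

lemma cont_N: "continuous_on S (\<lambda>y::real^3. N c i a (y$k))"
  by (subst N_lin) (intro continuous_intros)

lemma ned_poly_vec2: "ned_poly (\<lambda>y. vector [0, (A + B * y$1) * (C + D * y$3), 0])"
proof -
  have "\<forall>x::real^3. vector [0, (A + B * x$1) * (C + D * x$3), 0] =
     (vector [0 + 0 * x$2 + 0 * x$3 + 0 * x$2 * x$3, A*C + (A*D) * x$3 + (B*C) * x$1 + (B*D) * x$3 * x$1,
              0 + 0 * x$1 + 0 * x$2 + 0 * x$1 * x$2] :: real^3)"
    by (simp add: algebra_simps)
  then show ?thesis unfolding ned_poly_def by blast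
qed

lemma ned_poly_zero: "ned_poly (\<lambda>y. 0)"
proof -
  have "\<forall>x::real^3. (0::real^3) =
     vector [0 + 0 * x$2 + 0 * x$3 + 0 * x$2 * x$3, 0 + 0 * x$3 + 0 * x$1 + 0 * x$3 * x$1,
              0 + 0 * x$1 + 0 * x$2 + 0 * x$1 * x$2]"
    by (simp add: vec3_eq)
  then show ?thesis unfolding ned_poly_def by blast
qed

lemma ned_poly_cont2: "ned_poly P \<Longrightarrow> continuous_on S (\<lambda>y. P y $ 2)"
proof -
  assume "ned_poly P"
  then obtain a1 a2 a3 a4 b1 b2 b3 b4 c1 c2 c3 c4 :: real where
    Pf: "\<And>x. P x = vector [a1 + a2 * x$2 + a3 * x$3 + a4 * x$2 * x$3,
                   b1 + b2 * x$3 + b3 * x$1 + b4 * x$3 * x$1,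
                   c1 + c2 * x$1 + c3 * x$2 + c4 * x$1 * x$2]"
    unfolding ned_poly_def by blast
  show ?thesis unfolding Pf by (simp, intro continuous_intros)
qed

locale L =
  fixes cb :: "3 \<Rightarrow> nat \<Rightarrow> real"
  assumes cbmono: "\<And>m k. k < ncD m \<Longrightarrow> cb m k < cb m (Suc k)"
begin

abbreviation "G \<equiv> (\<lambda>m. refine (cb m))"

lemma Gstep: assumes "k < nfD m" shows "G m k < G m (Suc k)"
proof -
  obtain q where kq: "k = 2*q \<or> k = 2*q+1" by (metis oddE evenE)
  have qn: "q < ncD m" using assms kq by (auto simp: nfD_def)
  have c: "cb m q < cb m (Suc q)" using cbmono[of q m] qn by simp
  show ?thesis
  proof (cases "k = 2*q")
    case True
    have e1: "G m k = cb m q" using True refine_even[of "cb m" q] by simp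
    have e2: "G m (Suc k) = (cb m q + cb m (Suc q))/2" using True refine_odd[of "cb m" q] by simp
    show ?thesis unfolding e1 e2 using c by simp
  next
    case False
    then have k: "k = 2*q+1" "Suc k = 2 * Suc q" using kq by auto
    have e1: "G m k = (cb m q + cb m (Suc q))/2" using k(1) refine_odd[of "cb m" q] by simp
    have e2: "G m (Suc k) = cb m (Suc q)" using k(2) refine_even[of "cb m" "Suc q"] by simp
    show ?thesis unfolding e1 e2 using c by simp
  qed
qed

lemma Gless: assumes "a < b" "b \<le> nfD m" shows "G m a < G m b"
  using assms
proof (induction b)
  case 0 then show ?case by simp
next
  case (Suc b)
  show ?case
  proof (cases "a < b")
    case True then show ?thesis using Suc Gstep[of b m] by simp
  next
    case False then have "a = b" using Suc by simp
    then show ?thesis using Suc Gstep[of b m] by simp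
  qed
qed

lemma Gle: assumes "a \<le> b" "b \<le> nfD m" shows "G m a \<le> G m b"
proof (cases "a = b")
  case False then show ?thesis using Gless[of a b m] assms by linarith
qed simp


lemma in_cbox3: "x \<in> cbox a b \<longleftrightarrow> (\<forall>i. a$i \<le> x$i \<and> x$i \<le> (b::real^3)$i)"
  by (simp add: mem_box_cart)
lemma in_box3: "x \<in> box a b \<longleftrightarrow> (\<forall>i. a$i < x$i \<and> x$i < (b::real^3)$i)"
  by (simp add: mem_box_cart)

lemma vertex_in_cell:
  assumes "mu \<in> cell_idx nfD" "\<And>k. mu k \<le> nu k \<and> nu k \<le> Suc (mu k)"
  shows "gvert G nu \<in> gcell G mu"
  unfolding gcell_def in_cbox3
proof
  fix i
  have "mu i < nfD i" using assms(1) by (simp add: cell_idx_def)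
  then show "gvert G mu $ i \<le> gvert G nu $ i \<and> gvert G nu $ i \<le> gvert G (upper_idx mu) $ i"
    using assms(2)[of i] Gle[of "mu i" "nu i" i] Gle[of "nu i" "Suc (mu i)" i]
    by (simp add: upper_idx_def)
qed

lemma edge_in_cell:
  assumes "mu \<in> cell_idx nfD" "\<And>k. mu k \<le> nu k \<and> nu k \<le> Suc (mu k)" "nu n = mu n"
  shows "gedge G nu n \<subseteq> gcell G mu"
proof -
  have "gvert G nu \<in> gcell G mu" using vertex_in_cell assms by blast
  moreover have "gvert G (nu(n := Suc (nu n))) \<in> gcell G mu"
    using assms by (intro vertex_in_cell) auto
  ultimately show ?thesis unfolding gedge_def gcell_def
    by (intro closed_segment_subset) (auto simp: convex_box)
qed

lemma seg_comp:
  assumes "x \<in> closed_segment a b" "a$m = b$m" shows "x$m = (a::real^3)$m"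
proof -
  obtain t where "x = (1 - t) *\<^sub>R a + t *\<^sub>R b" using assms(1) by (auto simp: in_segment)
  then have "x$m = (1-t) * a$m + t * b$m" by simp
  then show ?thesis using assms(2) by (simp add: algebra_simps)
qed

lemma nfD_ge2: "2 \<le> nfD i" by (simp add: nfD_def ncD_def)

definition k0 :: "3 \<Rightarrow> nat" where "k0 = (\<lambda>_. 0)"

lemma gcell_k0: "gcell cb k0 = cbox (gvert G k0) (gvert G (\<lambda>_. 2))"
proof -
  have "gvert cb k0 = gvert G k0" "gvert cb (upper_idx k0) = gvert G (\<lambda>_. 2)"
    by (auto simp: vec_eq_iff k0_def upper_idx_def)
  then show ?thesis by (simp add: gcell_def)
qed

lemma edge_frontier:
  assumes "\<And>k. nu k \<le> 2" "nu n \<le> 1" "m \<noteq> n" "nu m = 0 \<or> nu m = 2"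
  shows "gedge G nu n \<subseteq> frontier (gcell cb k0)"
proof
  fix x assume x: "x \<in> gedge G nu n"
  have sub: "gedge G nu n \<subseteq> cbox (gvert G k0) (gvert G (\<lambda>_. 2))"
    unfolding gedge_def
  proof (intro closed_segment_subset)
    show "convex (cbox (gvert G k0) (gvert G (\<lambda>_. 2)))" by (simp add: convex_box)
    show "gvert G nu \<in> cbox (gvert G k0) (gvert G (\<lambda>_. 2))" unfolding in_cbox3
    proof
      fix i show "gvert G k0 $ i \<le> gvert G nu $ i \<and> gvert G nu $ i \<le> gvert G (\<lambda>_. 2) $ i"
        using Gle[of 0 "nu i" i] Gle[of "nu i" 2 i] assms(1)[of i]
        using nfD_ge2[of i] by (simp add: k0_def)
    qed
    show "gvert G (nu(n := Suc (nu n))) \<in> cbox (gvert G k0) (gvert G (\<lambda>_. 2))" unfolding in_cbox3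
    proof
      fix i show "gvert G k0 $ i \<le> gvert G (nu(n := Suc (nu n))) $ i \<and> gvert G (nu(n := Suc (nu n))) $ i \<le> gvert G (\<lambda>_. 2) $ i"
        using Gle[of 0 "(nu(n := Suc (nu n))) i" i] Gle[of "(nu(n := Suc (nu n))) i" 2 i] assms(1)[of i] assms(2)
        using nfD_ge2[of i] by (cases "i = n") (simp_all add: k0_def)
    qed
  qed
  have xm: "x$m = G m (nu m)" using seg_comp[of x "gvert G nu" "gvert G (nu(n := Suc (nu n)))" m] x assms(3)
    by (simp add: gedge_def)
  have "x \<notin> box (gvert G k0) (gvert G (\<lambda>_. 2))" unfolding in_box3 using xm assms(4)
    by (auto simp: k0_def intro!: exI[of _ m])
  then show "x \<in> frontier (gcell cb k0)" using sub x unfolding gcell_k0 frontier_cbox by blast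
qed

lemma open_cells_disjoint:
  assumes "nu \<in> cell_idx nfD" "mu \<in> cell_idx nfD" "x \<in> gcell_open G nu" "x \<in> gcell_open G mu"
  shows "nu = mu"
proof (rule ext)
  fix m
  have a: "G m (nu m) < x$m" "x$m < G m (Suc (nu m))" "G m (mu m) < x$m" "x$m < G m (Suc (mu m))"
    using assms(3,4) by (auto simp: gcell_open_def in_box3 upper_idx_def)
  have b: "nu m < nfD m" "mu m < nfD m" using assms(1,2) by (auto simp: cell_idx_def)
  show "nu m = mu m"
  proof (rule ccontr)
    assume "nu m \<noteq> mu m"
    then consider "Suc (nu m) \<le> mu m" | "Suc (mu m) \<le> nu m" by linarith
    then show False
    proof cases
      case 1 then show ?thesis using Gle[of "Suc (nu m)" "mu m" m] a b by linarith
    next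
      case 2 then show ?thesis using Gle[of "Suc (mu m)" "nu m" m] a b by linarith
    qed
  qed
qed



definition Sj :: "nat \<Rightarrow> (3 \<Rightarrow> nat) set" where
  "Sj j = {nu. nu 1 \<le> 1 \<and> nu 2 = j \<and> nu 3 \<le> 1}"

lemma Sj_eq: "Sj j = (\<lambda>(a,b). idx a j b) ` ({0,1} \<times> {0,1})"
proof
  show "Sj j \<subseteq> (\<lambda>(a,b). idx a j b) ` ({0,1} \<times> {0,1})"
  proof
    fix nu assume "nu \<in> Sj j"
    then have h: "nu 1 \<le> 1" "nu 2 = j" "nu 3 \<le> 1" by (auto simp: Sj_def)
    then have "nu = idx (nu 1) j (nu 3)" by (simp add: fun3_eq)
    moreover have "(nu 1, nu 3) \<in> {0,1} \<times> {0,1}" using h by auto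
    ultimately show "nu \<in> (\<lambda>(a,b). idx a j b) ` ({0,1} \<times> {0,1})" by force
  qed
  show "(\<lambda>(a,b). idx a j b) ` ({0,1} \<times> {0,1}) \<subseteq> Sj j" by (auto simp: Sj_def)
qed

lemma Sj_finite: "finite (Sj j)" unfolding Sj_eq by simp

lemma Sj_cell: "j < 4 \<Longrightarrow> nu \<in> Sj j \<Longrightarrow> nu \<in> cell_idx nfD"
  unfolding Sj_def cell_idx_def
proof (clarsimp)
  fix m :: 3 assume "nu 1 \<le> Suc 0" "nu 2 < 4" "nu 3 \<le> Suc 0"
  then show "nu m < nfD m" using exhaust_3[of m] by auto
qed

lemma Sj_idx: "nu \<in> Sj j \<Longrightarrow> nu = idx (nu 1) j (nu 3)"
  by (simp add: Sj_def fun3_eq)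

definition qf :: "nat \<Rightarrow> real \<Rightarrow> (3 \<Rightarrow> nat) \<Rightarrow> real^3 \<Rightarrow> real^3" where
  "qf j s nu y = (if nu \<in> Sj j then vector [0, s * N (G 1) (nu 1) 1 (y$1) * N (G 3) (nu 3) 1 (y$3), 0] else 0)"

definition wf :: "nat \<Rightarrow> real \<Rightarrow> real^3 \<Rightarrow> real^3" where
  "wf j s y = (\<Sum>nu\<in>Sj j. if y \<in> gcell_open G nu then qf j s nu y else 0)"

lemma qf_axis: "qf j s nu y = (if nu \<in> Sj j then s * N (G 1) (nu 1) 1 (y$1) * N (G 3) (nu 3) 1 (y$3) else 0) *\<^sub>R axis 2 1"
  by (simp add: qf_def vec3_eq axis_def)

lemma qf_comp: "qf j s nu y $ n = (if n = 2 \<and> nu \<in> Sj j then s * N (G 1) (nu 1) 1 (y$1) * N (G 3) (nu 3) 1 (y$3) else 0)"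
  unfolding qf_axis by (simp add: axis_def)

lemma wf_eq:
  assumes j: "j < 4" and nu: "nu \<in> cell_idx nfD" and y: "y \<in> gcell_open G nu"
  shows "wf j s y = qf j s nu y"
proof -
  have "wf j s y = (\<Sum>mu\<in>Sj j. if nu = mu then qf j s nu y else 0)"
    unfolding wf_def
  proof (rule sum.cong[OF refl])
    fix mu assume mu: "mu \<in> Sj j"
    have "y \<in> gcell_open G mu \<longleftrightarrow> nu = mu"
      using open_cells_disjoint[OF nu Sj_cell[OF j mu] y] y by auto
    then show "(if y \<in> gcell_open G mu then qf j s mu y else 0) = (if nu = mu then qf j s nu y else 0)"
      by auto
  qed
  also have "\<dots> = (if nu \<in> Sj j then qf j s nu y else 0)" using Sj_finite by simp
  also have "\<dots> = qf j s nu y" by (simp add: qf_def)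
  finally show ?thesis .
qed

lemma Gdiff: "i < nfD m \<Longrightarrow> G m (Suc i) - G m i \<noteq> 0" using Gstep[of i m] by simp

lemma N_one: "N (G m) 0 1 (G m 1) = 1" "N (G m) 1 1 (G m 1) = 1"
  using Gdiff[of 0 m] Gdiff[of 1 m] nfD_ge2[of m] by (auto simp: N_def)

lemma N_zero: "N (G m) 1 1 (G m 2) = 0" "N (G m) 0 1 (G m 0) = 0"
  by (auto simp: N_def numeral_2_eq_2)

lemma N_nonneg: assumes "i < nfD m" "G m i \<le> t" "t \<le> G m (Suc i)" shows "0 \<le> N (G m) i a t"
  using assms Gstep[of i m] by (auto simp: N_def)

lemma N_mid: assumes "i < nfD m" shows "N (G m) i a ((G m i + G m (Suc i))/2) = 1/2"
  using Gdiff[OF assms] by (auto simp: N_def field_simps)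

lemma N_bd:
  assumes "i \<le> 1" "G m i \<le> t" "t \<le> G m (Suc i)" "t = G m 0 \<or> t = G m 2"
  shows "N (G m) i 1 t = 0"
proof -
  have g: "G m 0 < G m 1" "G m 1 < G m 2" using Gstep[of 0 m] Gstep[of 1 m] nfD_ge2[of m]
    by (simp_all add: numeral_2_eq_2)
  show ?thesis
  proof (cases "i = 0")
    case True then show ?thesis using assms g N_zero by auto
  next
    case False then have "i = 1" using assms by simp
    then show ?thesis using assms g N_zero by (auto simp: numeral_2_eq_2)
  qed
qed

lemma cell_bounds:
  assumes "x \<in> gcell G nu" shows "G m (nu m) \<le> x$m" "x$m \<le> G m (Suc (nu m))"
  using assms by (auto simp: gcell_def in_cbox3 upper_idx_def)

lemma in_NhT_w:
  assumes j: "j \<le> 1"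
  shows "in_NhT cb nfD k0 (qf j s) (wf j s)"
  unfolding in_NhT_def ned_rep_def
proof (intro conjI ballI allI impI)
  fix nu assume nu: "nu \<in> cell_idx nfD"
  show "ned_poly (qf j s nu)"
  proof (cases "nu \<in> Sj j")
    case True
    have "qf j s nu y = vector [0, ((s * N (G 1) (nu 1) 1 0) + (s * (N (G 1) (nu 1) 1 1 - N (G 1) (nu 1) 1 0)) * y$1)
          * (N (G 3) (nu 3) 1 0 + (N (G 3) (nu 3) 1 1 - N (G 3) (nu 3) 1 0) * y$3), 0]" for y
      using True unfolding qf_def N_lin[of "G 1" "nu 1" 1 "y$1"] N_lin[of "G 3" "nu 3" 1 "y$3"]
      by (simp add: algebra_simps)
    then have "qf j s nu = (\<lambda>y. vector [0, ((s * N (G 1) (nu 1) 1 0) + (s * (N (G 1) (nu 1) 1 1 - N (G 1) (nu 1) 1 0)) * y$1)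
          * (N (G 3) (nu 3) 1 0 + (N (G 3) (nu 3) 1 1 - N (G 3) (nu 3) 1 0) * y$3), 0])" by (rule ext)
    then show ?thesis by (simp add: ned_poly_vec2)
  next
    case False
    then have "qf j s nu = (\<lambda>y. 0)" by (simp add: qf_def fun_eq_iff)
    then show ?thesis by (simp add: ned_poly_zero)
  qed
  fix x assume "x \<in> gcell_open G nu"
  then show "wf j s x = qf j s nu x" using wf_eq[of j nu x s] j nu by simp
next
  fix nu mu m x n
  assume nu: "nu \<in> cell_idx nfD" and mu: "mu \<in> cell_idx nfD" and mueq: "mu = nu(m := Suc (nu m))"
    and x: "x \<in> gcell G nu \<inter> gcell G mu" and nm: "n \<noteq> m"
  have xm: "x$m = G m (Suc (nu m))"
    using cell_bounds[of x nu m] cell_bounds[of x mu m] x mueq by force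
  show "qf j s nu x $ n = qf j s mu x $ n"
  proof (cases "n = 2")
    case False then show ?thesis by (simp add: qf_comp)
  next
    case True
    have m13: "m = 1 \<or> m = 3" using nm True exhaust_3[of m] by auto
    have o: "mu 1 = (if m = 1 then Suc (nu 1) else nu 1)" "mu 2 = nu 2" "mu 3 = (if m = 3 then Suc (nu 3) else nu 3)"
      using mueq m13 by auto
    have b: "nu 1 < 2" "mu 1 < 2" "mu 3 < 4" using nu mu unfolding cell_idx_def
      by (metis mem_Collect_eq nfD_simps(1), metis mem_Collect_eq nfD_simps(1), metis mem_Collect_eq nfD_simps(3))
    show ?thesis
    proof (cases "m = 1")
      case m1: True
      then have "nu 1 = 0" "mu 1 = 1" using o b by auto
      moreover have "x$1 = G 1 1" using xm m1 \<open>nu 1 = 0\<close> by simp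
      moreover have "nu \<in> Sj j \<longleftrightarrow> mu \<in> Sj j" using o m1 calculation by (auto simp: Sj_def)
      ultimately show ?thesis using True o m1 N_one[of 1] by (auto simp: qf_comp)
    next
      case m3: False
      then have m3: "m = 3" using m13 by simp
      have x3: "x$3 = G 3 (Suc (nu 3))" using xm m3 by simp
      show ?thesis
      proof (cases "nu \<in> Sj j")
        case nS: True
        show ?thesis
        proof (cases "mu \<in> Sj j")
          case True
          then have "nu 3 = 0" "mu 3 = 1" using o m3 nS by (auto simp: Sj_def)
          then show ?thesis using nS True o x3 \<open>n = 2\<close> N_one[of 3] by (auto simp: qf_comp)
        next
          case False
          then have "nu 3 = 1" using o m3 nS by (auto simp: Sj_def)
          then show ?thesis using nS False x3 \<open>n = 2\<close> N_zero[of 3] by (auto simp: qf_comp numeral_2_eq_2)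
        qed
      next
        case nS: False
        then have "mu \<notin> Sj j" using o m3 by (auto simp: Sj_def)
        then show ?thesis using nS by (simp add: qf_comp)
      qed
    qed
  qed
next
  fix nu assume nu: "nu \<in> cell_idx nfD" and c: "coarse_of nu \<noteq> k0"
  have "nu \<notin> Sj j"
  proof
    assume "nu \<in> Sj j"
    then have "coarse_of nu = k0" using j by (auto simp: Sj_def coarse_of_def k0_def fun3_eq)
    then show False using c by simp
  qed
  then show "qf j s nu = (\<lambda>_. 0)" by (simp add: qf_def fun_eq_iff)
next
  fix nu m x n
  assume nu: "nu \<in> cell_idx nfD" and c: "coarse_of nu = k0" and x: "x \<in> gcell G nu"
    and xb: "x $ m = cb m (k0 m) \<or> x $ m = cb m (Suc (k0 m))" and nm: "n \<noteq> m"
  show "qf j s nu x $ n = 0"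
  proof (cases "n = 2 \<and> nu \<in> Sj j")
    case False then show ?thesis by (auto simp: qf_comp)
  next
    case True
    then have m13: "m = 1 \<or> m = 3" using nm exhaust_3[of m] by auto
    have xb': "x$m = G m 0 \<or> x$m = G m 2" using xb by (simp add: k0_def)
    have le: "nu m \<le> 1" using True m13 by (auto simp: Sj_def)
    have "N (G m) (nu m) 1 (x$m) = 0"
      by (rule N_bd[OF le cell_bounds(1)[OF x, of m] cell_bounds(2)[OF x, of m] xb'])
    then show ?thesis using True m13 by (auto simp: qf_comp)
  qed
qed

definition ctr :: "(3 \<Rightarrow> nat) \<Rightarrow> real^3" where
  "ctr nu = (\<chi> m. (G m (nu m) + G m (Suc (nu m)))/2)"

lemma ctr_box: "nu \<in> cell_idx nfD \<Longrightarrow> ctr nu \<in> box (gvert G nu) (gvert G (upper_idx nu))"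
  unfolding in_box3
proof
  fix m assume "nu \<in> cell_idx nfD"
  then have "nu m < nfD m" by (simp add: cell_idx_def)
  then show "gvert G nu $ m < ctr nu $ m \<and> ctr nu $ m < gvert G (upper_idx nu) $ m"
    using Gstep[of "nu m" m] by (simp add: ctr_def upper_idx_def)
qed

lemma cell_sub_k0:
  assumes "nu \<in> Sj j" "j \<le> 1"
  shows "box (gvert G nu) (gvert G (upper_idx nu)) \<subseteq> gcell cb k0"
proof
  fix x assume x: "x \<in> box (gvert G nu) (gvert G (upper_idx nu))"
  show "x \<in> gcell cb k0" unfolding gcell_k0 in_cbox3
  proof
    fix m
    have a: "nu m \<le> 1" using assms exhaust_3[of m] by (auto simp: Sj_def)
    have "G m (nu m) < x$m" "x$m < G m (Suc (nu m))" using x by (auto simp: in_box3 upper_idx_def)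
    moreover have "G m 0 \<le> G m (nu m)" "G m (Suc (nu m)) \<le> G m 2"
      using Gle[of 0 "nu m" m] Gle[of "Suc (nu m)" 2 m] a nfD_ge2[of m] by auto
    ultimately show "gvert G k0 $ m \<le> x $ m \<and> x $ m \<le> gvert G (\<lambda>_. 2) $ m"
      by (simp add: k0_def)
  qed
qed

end

locale L2 = L cb for cb +
  fixes pos :: "3 \<Rightarrow> bool"
    and u :: "real^3 \<Rightarrow> real^3"
    and p :: "(3 \<Rightarrow> nat) \<Rightarrow> real^3 \<Rightarrow> real^3"
  assumes Nh: "ned_rep (\<lambda>m. refine (cb m)) nfD p u"
    and i_in: "\<And>i. tang_on_edge (\<lambda>m. refine (cb m)) nfD p (tdir pos i) (e_in pos i) (-1)"
    and i_out: "\<And>i. tang_on_edge (\<lambda>m. refine (cb m)) nfD p (tdir pos i) (e_out pos i) 1"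
    and ii: "\<And>e. e \<in> edge_idx nfD \<Longrightarrow> e \<notin> range (e_in pos) \<Longrightarrow> e \<notin> range (e_out pos) \<Longrightarrow>
              gedge (\<lambda>m. refine (cb m)) (fst e) (snd e)
                \<subseteq> (\<Union>kappa \<in> cell_idx ncD. frontier (gcell cb kappa)) \<Longrightarrow>
              tang_on_edge (\<lambda>m. refine (cb m)) nfD p (axis (snd e) 1) e 0"
    and iii: "\<And>kappa q w. kappa \<in> cell_idx ncD \<Longrightarrow> in_NhT cb nfD kappa q w \<Longrightarrow>
              integral (gcell cb kappa) (\<lambda>x. u x \<bullet> w x) = 0"
begin

lemma poly_cell: "nu \<in> cell_idx nfD \<Longrightarrow> ned_poly (p nu)"
  using Nh by (simp add: ned_rep_def)

lemma u_eq: "nu \<in> cell_idx nfD \<Longrightarrow> x \<in> gcell_open G nu \<Longrightarrow> u x = p nu x"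
  using Nh by (simp add: ned_rep_def)

lemma cont: "nu \<in> cell_idx nfD \<Longrightarrow> nu(m := Suc (nu m)) \<in> cell_idx nfD \<Longrightarrow>
   x \<in> gcell G nu \<Longrightarrow> x \<in> gcell G (nu(m := Suc (nu m))) \<Longrightarrow> n \<noteq> m \<Longrightarrow>
   p nu x $ n = p (nu(m := Suc (nu m))) x $ n"
  using Nh unfolding ned_rep_def by blast

lemma k0_in: "k0 \<in> cell_idx ncD" by (simp add: k0_def cell_idx_def ncD_def)

lemma edge_zero:
  assumes "\<And>k. nu k \<le> 2" "nu n \<le> 1" "m \<noteq> n" "nu m = 0 \<or> nu m = 2"
    "nu \<noteq> vidx" "nu \<noteq> vidx(n := vidx n - 1)"
    "mu \<in> cell_idx nfD" "\<And>k. mu k \<le> nu k \<and> nu k \<le> Suc (mu k)" "nu n = mu n"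
  shows "p mu (gvert G nu) $ n = 0"
proof -
  have e1: "(nu, n) \<in> edge_idx nfD" unfolding edge_idx_def
  proof (clarsimp, intro conjI allI)
    show "nu n < nfD n" using assms(2) nfD_ge2[of n] by linarith
    fix k show "nu k \<le> nfD k" using assms(1)[of k] nfD_ge2[of k] by linarith
  qed
  have e2: "(nu, n) \<notin> range (e_in pos)" "(nu, n) \<notin> range (e_out pos)"
    using range_e[of nu n pos] assms(5,6) by auto
  have e3: "gedge G nu n \<subseteq> (\<Union>kappa \<in> cell_idx ncD. frontier (gcell cb kappa))"
    using edge_frontier[OF assms(1-4)] k0_in by blast
  have "tang_on_edge G nfD p (axis n 1) (nu, n) 0" using ii[OF e1 e2] e3 by simp
  moreover have "gedge G nu n \<subseteq> gcell G mu" using edge_in_cell assms(7-9) by blast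
  moreover have "gvert G nu \<in> gedge G nu n" by (simp add: gedge_def)
  ultimately show ?thesis using assms(7) unfolding tang_on_edge_def by (auto simp: inner_axis)
qed

lemma vedge_val:
  assumes "mu \<in> cell_idx nfD" "\<And>k. mu k \<le> idx 1 1 2 k \<and> idx 1 1 2 k \<le> Suc (mu k)" "mu 2 = 1"
  shows "p mu (gvert G (idx 1 1 2)) $ 2 = -1"
proof -
  have vv: "vidx(2 := 1) = idx 1 1 2" by (simp add: fun3_eq)
  have sub: "gedge G (idx 1 1 2) 2 \<subseteq> gcell G mu" using edge_in_cell assms by simp
  have pt: "gvert G (idx 1 1 2) \<in> gedge G (idx 1 1 2) 2" by (simp add: gedge_def)
  show ?thesis
  proof (cases "pos 2")
    case True
    then have "e_in pos 2 = (idx 1 1 2, 2)" using vv by (simp add: e_in_def)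
    then show ?thesis using i_in[of 2] True sub pt assms(1) unfolding tang_on_edge_def
      by (auto simp: tdir_def inner_axis)
  next
    case False
    then have "e_out pos 2 = (idx 1 1 2, 2)" using vv by (simp add: e_out_def)
    then show ?thesis using i_out[of 2] False sub pt assms(1) unfolding tang_on_edge_def
      by (auto simp: tdir_def inner_axis)
  qed
qed


lemma idx_cell: "i < 2 \<Longrightarrow> j < 4 \<Longrightarrow> k < 4 \<Longrightarrow> idx i j k \<in> cell_idx nfD"
  unfolding cell_idx_def
proof (clarsimp)
  fix m :: 3 assume "i < 2" "j < 4" "k < 4"
  then show "idx i j k m < nfD m" using exhaust_3[of m] by auto
qed

lemma corner:
  assumes "i \<le> 1" "k \<le> 1" "j \<le> 1" "a = i \<or> a = Suc i" "b = k \<or> b = Suc k"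
  shows "p (idx i j k) (gvert G (idx a j b)) $ 2 =
    (if a = 1 \<and> b = 1 then p (idx i j k) (gvert G (idx 1 j 1)) $ 2
     else if j = 1 \<and> a = 1 \<and> b = 2 then -1 else 0)"
proof -
  have cell: "idx i j k \<in> cell_idx nfD" using assms by (intro idx_cell) auto
  have rng: "idx i j k m \<le> idx a j b m \<and> idx a j b m \<le> Suc (idx i j k m)" for m
    using exhaust_3[of m] assms by auto
  show ?thesis
  proof (cases "a = 1 \<and> b = 1")
    case True then show ?thesis by simp
  next
    case F1: False
    show ?thesis
    proof (cases "j = 1 \<and> a = 1 \<and> b = 2")
      case True
      have "p (idx i 1 k) (gvert G (idx 1 1 2)) $ 2 = -1"
        using vedge_val[of "idx i 1 k"] cell rng True by simp
      then show ?thesis using True by simp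
    next
      case False
      have m: "(if a \<noteq> 1 then (1::3) else 3) \<noteq> 2" by simp
      have face: "idx a j b (if a \<noteq> 1 then (1::3) else 3) = 0 \<or> idx a j b (if a \<noteq> 1 then (1::3) else 3) = 2"
        using assms F1 by auto
      have nv: "idx a j b \<noteq> vidx" "idx a j b \<noteq> vidx(2 := vidx 2 - 1)"
        using assms False by (auto simp: fun3_eq)
      have "p (idx i j k) (gvert G (idx a j b)) $ 2 = 0"
      proof (rule edge_zero[OF _ _ m face nv cell rng])
        fix m show "idx a j b m \<le> 2" using exhaust_3[of m] assms by auto
      qed (use assms in auto)
      then show ?thesis using F1 False by auto
    qed
  qed
qed

lemma Gpos: "k < nfD m \<Longrightarrow> G m (Suc k) - G m k > 0" using Gstep by simp

lemma cell_formula: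
  assumes "i \<le> 1" "k \<le> 1" "j \<le> 1"
  shows "p (idx i j k) y $ 2 =
    p (idx i j k) (gvert G (idx 1 j 1)) $ 2 * N (G 1) i 1 (y$1) * N (G 3) k 1 (y$3)
    + (if j = 1 \<and> k = 1 then - (N (G 1) i 1 (y$1) * N (G 3) k 2 (y$3)) else 0)"
proof -
  have cell: "idx i j k \<in> cell_idx nfD" using assms by (intro idx_cell) auto
  have I0: "p (idx i j k) y $ 2 =
     p (idx i j k) (gvert G (idx i j k)) $ 2 * ((G 1 (Suc i) - y$1)/(G 1 (Suc i) - G 1 i)) * ((G 3 (Suc k) - y$3)/(G 3 (Suc k) - G 3 k))
   + p (idx i j k) (gvert G (idx (Suc i) j k)) $ 2 * ((y$1 - G 1 i)/(G 1 (Suc i) - G 1 i)) * ((G 3 (Suc k) - y$3)/(G 3 (Suc k) - G 3 k))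
   + p (idx i j k) (gvert G (idx i j (Suc k))) $ 2 * ((G 1 (Suc i) - y$1)/(G 1 (Suc i) - G 1 i)) * ((y$3 - G 3 k)/(G 3 (Suc k) - G 3 k))
   + p (idx i j k) (gvert G (idx (Suc i) j (Suc k))) $ 2 * ((y$1 - G 1 i)/(G 1 (Suc i) - G 1 i)) * ((y$3 - G 3 k)/(G 3 (Suc k) - G 3 k))"
    using assms by (intro interp2 poly_cell cell Gstep) auto
  have I: "p (idx i j k) y $ 2 =
     p (idx i j k) (gvert G (idx i j k)) $ 2 * N (G 1) i i (y$1) * N (G 3) k k (y$3)
   + p (idx i j k) (gvert G (idx (Suc i) j k)) $ 2 * N (G 1) i (Suc i) (y$1) * N (G 3) k k (y$3)
   + p (idx i j k) (gvert G (idx i j (Suc k))) $ 2 * N (G 1) i i (y$1) * N (G 3) k (Suc k) (y$3)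
   + p (idx i j k) (gvert G (idx (Suc i) j (Suc k))) $ 2 * N (G 1) i (Suc i) (y$1) * N (G 3) k (Suc k) (y$3)"
    unfolding I0 by (simp add: N_def)
  have c1: "p (idx i j k) (gvert G (idx i j k)) $ 2 = (if i = 1 \<and> k = 1 then p (idx i j k) (gvert G (idx 1 j 1)) $ 2 else 0)"
    using corner[of i k j i k] assms by auto
  have c2: "p (idx i j k) (gvert G (idx (Suc i) j k)) $ 2 = (if i = 0 \<and> k = 1 then p (idx i j k) (gvert G (idx 1 j 1)) $ 2 else 0)"
    using corner[of i k j "Suc i" k] assms by auto
  have c3: "p (idx i j k) (gvert G (idx i j (Suc k))) $ 2 = (if i = 1 \<and> k = 0 then p (idx i j k) (gvert G (idx 1 j 1)) $ 2
     else if j = 1 \<and> i = 1 \<and> k = 1 then -1 else 0)"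
    using corner[of i k j i "Suc k"] assms by auto
  have c4: "p (idx i j k) (gvert G (idx (Suc i) j (Suc k))) $ 2 = (if i = 0 \<and> k = 0 then p (idx i j k) (gvert G (idx 1 j 1)) $ 2
     else if j = 1 \<and> i = 0 \<and> k = 1 then -1 else 0)"
    using corner[of i k j "Suc i" "Suc k"] assms by auto
  have ii': "i = 0 \<or> i = 1" "k = 0 \<or> k = 1" using assms by auto
  have pos: "G 1 0 < G 1 (Suc 0)" "G 1 (Suc 0) < G 1 (Suc (Suc 0))" "G 3 0 < G 3 (Suc 0)" "G 3 (Suc 0) < G 3 (Suc (Suc 0))"
    using Gstep[of 0 1] Gstep[of 1 1] Gstep[of 0 3] Gstep[of 1 3] by (simp_all del: refine_vals)
  show ?thesis unfolding I c1 c2 c3 c4 using ii' by (auto simp: numeral_2_eq_2)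
qed


lemma ez:
  assumes "a \<le> 2" "b \<le> 2" "c \<le> 2" "idx a b c n \<le> 1" "m \<noteq> n"
    "idx a b c m = 0 \<or> idx a b c m = 2" "idx a b c \<noteq> vidx" "idx a b c \<noteq> vidx(n := vidx n - 1)"
    "i < 2" "j < 4" "k < 4" "i \<le> a" "a \<le> Suc i" "j \<le> b" "b \<le> Suc j" "k \<le> c" "c \<le> Suc k"
    "idx a b c n = idx i j k n"
  shows "p (idx i j k) (gvert G (idx a b c)) $ n = 0"
proof (rule edge_zero[OF _ assms(4,5,6,7,8)])
  fix l show "idx a b c l \<le> 2" using exhaust_3[of l] assms by auto
  show "idx i j k l \<le> idx a b c l \<and> idx a b c l \<le> Suc (idx i j k l)" using exhaust_3[of l] assms by auto
qed (use assms idx_cell in auto)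

lemma curl_cell:
  assumes nu: "nu \<in> cell_idx nfD" and curl: "\<forall>x \<in> gcell_open G nu. curl3 u x = 0"
    and pts: "y0$1 = x1" "y1$1 = x1" "z0$1 = x1" "z1$1 = x1" "y0$2 = y1$2" "z0$3 = z1$3"
  shows "(p nu y1 $ 2 - p nu y0 $ 2) * (z1$2 - z0$2) = (p nu z1 $ 3 - p nu z0 $ 3) * (y1$3 - y0$3)"
proof -
  obtain a1 a2 a3 a4 b1 b2 b3 b4 c1 c2 c3 c4 :: real where
    Pf: "\<And>x. p nu x = vector [a1 + a2 * x$2 + a3 * x$3 + a4 * x$2 * x$3,
                   b1 + b2 * x$3 + b3 * x$1 + b4 * x$3 * x$1,
                   c1 + c2 * x$1 + c3 * x$2 + c4 * x$1 * x$2]"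
    using poly_cell[OF nu] unfolding ned_poly_def by blast
  have rel: "c3 + c4 * x$1 = b2 + b4 * x$1" if x: "x \<in> gcell_open G nu" for x
  proof -
    have "curl3 u x $ 1 = 0" using curl x by simp
    then have "pderiv3 u 3 2 x - pderiv3 u 2 3 x = 0" by (simp add: curl3_def)
    moreover have "pderiv3 u 3 2 x = c3 + c4 * x$1" "pderiv3 u 2 3 x = b2 + b4 * x$1"
      using pderiv_poly[of "gcell_open G nu" x u "p nu", OF _ x _ Pf] u_eq[OF nu]
      by (auto simp: gcell_open_def)
    ultimately show ?thesis by simp
  qed
  define lo where "lo = gvert G nu"
  define hi where "hi = gvert G (upper_idx nu)"
  have lohi: "lo$m < hi$m" for m
    using nu Gstep[of "nu m" m] by (auto simp: lo_def hi_def upper_idx_def cell_idx_def)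
  define xa :: "real^3" where "xa = vector [(2*lo$1 + hi$1)/3, (lo$2 + hi$2)/2, (lo$3 + hi$3)/2]"
  define xb :: "real^3" where "xb = vector [(lo$1 + 2*hi$1)/3, (lo$2 + hi$2)/2, (lo$3 + hi$3)/2]"
  have l1: "lo$1 < hi$1" "lo$2 < hi$2" "lo$3 < hi$3" using lohi by auto
  have xa: "xa \<in> gcell_open G nu"
    unfolding gcell_open_def lo_def[symmetric] hi_def[symmetric] in_box3 forall_3
  proof (intro conjI)
    show "lo $ 1 < xa $ 1" "xa $ 1 < hi $ 1" unfolding xa_def using l1 by simp_all
    show "lo $ 2 < xa $ 2" "xa $ 2 < hi $ 2" unfolding xa_def using l1 by simp_all
    show "lo $ 3 < xa $ 3" "xa $ 3 < hi $ 3" unfolding xa_def using l1 by simp_all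
  qed
  have xb: "xb \<in> gcell_open G nu"
    unfolding gcell_open_def lo_def[symmetric] hi_def[symmetric] in_box3 forall_3
  proof (intro conjI)
    show "lo $ 1 < xb $ 1" "xb $ 1 < hi $ 1" unfolding xb_def using l1 by simp_all
    show "lo $ 2 < xb $ 2" "xb $ 2 < hi $ 2" unfolding xb_def using l1 by simp_all
    show "lo $ 3 < xb $ 3" "xb $ 3 < hi $ 3" unfolding xb_def using l1 by simp_all
  qed
  have ra: "c3 + c4 * ((2*lo$1 + hi$1)/3) = b2 + b4 * ((2*lo$1 + hi$1)/3)"
    using rel[OF xa] unfolding xa_def by simp
  have rb: "c3 + c4 * ((lo$1 + 2*hi$1)/3) = b2 + b4 * ((lo$1 + 2*hi$1)/3)"
    using rel[OF xb] unfolding xb_def by simp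
  have ne: "(2*lo$1 + hi$1)/3 \<noteq> (lo$1 + 2*hi$1)/3" using l1 by simp
  note cc = lin2[OF ra rb ne]
  have d2: "p nu y1 $ 2 - p nu y0 $ 2 = (b2 + b4*x1)*(y1$3 - y0$3)"
    unfolding Pf using pts by (simp add: algebra_simps)
  have d3: "p nu z1 $ 3 - p nu z0 $ 3 = (c3 + c4*x1)*(z1$2 - z0$2)"
    unfolding Pf using pts by (simp add: algebra_simps)
  show ?thesis unfolding d2 d3 cc by (simp add: algebra_simps)
qed

definition "beta = p (idx 0 0 0) (gvert G (idx 1 0 1)) $ 2"
definition "gamma = p (idx 0 1 0) (gvert G (idx 1 1 1)) $ 2"

lemma beta_gamma:
  assumes curl: "\<forall>nu \<in> cell_idx nfD. \<forall>x \<in> gcell_open G nu. curl3 u x = 0"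
  shows "gamma = - beta"
proof -
  have A: "idx 0 0 0 \<in> cell_idx nfD" "idx 0 1 0 \<in> cell_idx nfD" by (auto intro: idx_cell)
  have z1: "p (idx 0 0 0) (gvert G (idx 1 0 0)) $ 2 = 0"
    by (rule ez[where m=3]) (auto simp: fun3_eq)
  have z2: "p (idx 0 0 0) (gvert G (idx 1 0 0)) $ 3 = 0"
    by (rule ez[where m=2]) (auto simp: fun3_eq)
  have z3: "p (idx 0 1 0) (gvert G (idx 1 1 0)) $ 2 = 0"
    by (rule ez[where m=3]) (auto simp: fun3_eq)
  have z4: "p (idx 0 1 0) (gvert G (idx 1 2 0)) $ 3 = 0"
    by (rule ez[where m=2]) (auto simp: fun3_eq)
  have AB: "(idx 0 0 0)(2 := Suc (idx 0 0 0 2)) = idx 0 1 0" by (simp add: fun3_eq)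
  have eps: "p (idx 0 0 0) (gvert G (idx 1 1 0)) $ 3 = p (idx 0 1 0) (gvert G (idx 1 1 0)) $ 3"
  proof -
    have v1: "gvert G (idx 1 1 0) \<in> gcell G (idx 0 0 0)"
    proof (rule vertex_in_cell[OF A(1)])
      fix k show "idx 0 0 0 k \<le> idx 1 1 0 k \<and> idx 1 1 0 k \<le> Suc (idx 0 0 0 k)" using exhaust_3[of k] by auto
    qed
    have v2: "gvert G (idx 1 1 0) \<in> gcell G (idx 0 1 0)"
    proof (rule vertex_in_cell[OF A(2)])
      fix k show "idx 0 1 0 k \<le> idx 1 1 0 k \<and> idx 1 1 0 k \<le> Suc (idx 0 1 0 k)" using exhaust_3[of k] by auto
    qed
    show ?thesis using cont[of "idx 0 0 0" 2 "gvert G (idx 1 1 0)" 3] A v1 v2 unfolding AB by simp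
  qed
  have cA: "(p (idx 0 0 0) (gvert G (idx 1 0 1)) $ 2 - p (idx 0 0 0) (gvert G (idx 1 0 0)) $ 2)
      * (gvert G (idx 1 1 0) $ 2 - gvert G (idx 1 0 0) $ 2)
    = (p (idx 0 0 0) (gvert G (idx 1 1 0)) $ 3 - p (idx 0 0 0) (gvert G (idx 1 0 0)) $ 3)
      * (gvert G (idx 1 0 1) $ 3 - gvert G (idx 1 0 0) $ 3)"
    by (rule curl_cell[OF A(1)]) (use curl A in auto)
  have cB: "(p (idx 0 1 0) (gvert G (idx 1 1 1)) $ 2 - p (idx 0 1 0) (gvert G (idx 1 1 0)) $ 2)
      * (gvert G (idx 1 2 0) $ 2 - gvert G (idx 1 1 0) $ 2)
    = (p (idx 0 1 0) (gvert G (idx 1 2 0)) $ 3 - p (idx 0 1 0) (gvert G (idx 1 1 0)) $ 3)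
      * (gvert G (idx 1 1 1) $ 3 - gvert G (idx 1 1 0) $ 3)"
    by (rule curl_cell[OF A(2)]) (use curl A in auto)
  have d: "G 2 2 - G 2 1 = G 2 1 - G 2 0" by (rule refine_mid)
  have p2: "G 2 1 - G 2 0 > 0" "G 3 1 - G 3 0 > 0" using Gstep[of 0 2] Gstep[of 0 3] by simp_all
  have e1: "beta * (G 2 1 - G 2 0) = p (idx 0 1 0) (gvert G (idx 1 1 0)) $ 3 * (G 3 1 - G 3 0)"
    using cA unfolding beta_def by (simp only: gvert_comp idx_simps z1 z2 eps diff_zero)
  have e2: "gamma * (G 2 2 - G 2 1) = - p (idx 0 1 0) (gvert G (idx 1 1 0)) $ 3 * (G 3 1 - G 3 0)"
    using cB unfolding gamma_def by (simp only: gvert_comp idx_simps z3 z4 diff_zero diff_0 mult_minus_left)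
  have "(gamma + beta) * (G 2 1 - G 2 0) = 0"
  proof -
    have "(gamma + beta) * (G 2 1 - G 2 0) = gamma * (G 2 2 - G 2 1) + beta * (G 2 1 - G 2 0)"
      unfolding d by (simp add: algebra_simps)
    also have "\<dots> = 0" unfolding e1 e2 by simp
    finally show ?thesis .
  qed
  then show ?thesis using p2 by simp
qed


definition hf :: "nat \<Rightarrow> real \<Rightarrow> (3 \<Rightarrow> nat) \<Rightarrow> real^3 \<Rightarrow> real" where
  "hf j s nu y = p nu y $ 2 * (s * N (G 1) (nu 1) 1 (y$1) * N (G 3) (nu 3) 1 (y$3))"

lemma pq: "nu \<in> Sj j \<Longrightarrow> p nu y \<bullet> qf j s nu y = hf j s nu y"
  by (simp add: qf_axis inner_axis hf_def)

lemma int_eq: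
  assumes j: "j \<le> 1"
  shows "integral (gcell cb k0) (\<lambda>x. u x \<bullet> wf j s x)
    = (\<Sum>nu\<in>Sj j. integral (cbox (gvert G nu) (gvert G (upper_idx nu))) (hf j s nu))"
proof -
  have pw: "(\<lambda>x. u x \<bullet> wf j s x) = (\<lambda>x. \<Sum>nu\<in>Sj j. if x \<in> box (gvert G nu) (gvert G (upper_idx nu)) then hf j s nu x else 0)"
  proof
    fix x
    show "u x \<bullet> wf j s x = (\<Sum>nu\<in>Sj j. if x \<in> box (gvert G nu) (gvert G (upper_idx nu)) then hf j s nu x else 0)"
      unfolding wf_def inner_sum_right
    proof (rule sum.cong[OF refl])
      fix nu assume nu: "nu \<in> Sj j"
      have c: "nu \<in> cell_idx nfD" using Sj_cell[of j nu] nu j by simp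
      show "u x \<bullet> (if x \<in> gcell_open G nu then qf j s nu x else 0) =
         (if x \<in> box (gvert G nu) (gvert G (upper_idx nu)) then hf j s nu x else 0)"
        using u_eq[OF c, of x] pq[OF nu] by (simp add: gcell_open_def)
    qed
  qed
  show ?thesis unfolding pw
  proof (rule int_split[OF Sj_finite])
    fix nu assume nu: "nu \<in> Sj j"
    show "box (gvert G nu) (gvert G (upper_idx nu)) \<subseteq> gcell cb k0" using cell_sub_k0[OF nu j] .
    have c: "nu \<in> cell_idx nfD" using Sj_cell[of j nu] nu j by simp
    show "continuous_on (cbox (gvert G nu) (gvert G (upper_idx nu))) (hf j s nu)"
      unfolding hf_def by (intro continuous_intros cont_N ned_poly_cont2 poly_cell c)
  qed
qed

lemma center_const:
  assumes j: "j \<le> 1" and nu: "nu \<in> Sj j"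
  shows "p nu (gvert G (idx 1 j 1)) $ 2 = p (idx 0 j 0) (gvert G (idx 1 j 1)) $ 2"
proof -
  have cells: "idx a j b \<in> cell_idx nfD" if "a \<le> 1" "b \<le> 1" for a b
    using that j by (intro idx_cell) auto
  have vin: "gvert G (idx 1 j 1) \<in> gcell G (idx a j b)" if "a \<le> 1" "b \<le> 1" for a b
  proof (rule vertex_in_cell[OF cells[OF that]])
    fix k show "idx a j b k \<le> idx 1 j 1 k \<and> idx 1 j 1 k \<le> Suc (idx a j b k)"
      using exhaust_3[of k] that by auto
  qed
  have u1: "(idx a j b)(1 := Suc (idx a j b 1)) = idx (Suc a) j b" for a b by (simp add: fun3_eq)
  have u3: "(idx a j b)(3 := Suc (idx a j b 3)) = idx a j (Suc b)" for a b by (simp add: fun3_eq)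
  have e1: "p (idx 0 j 0) (gvert G (idx 1 j 1)) $ 2 = p (idx 1 j 0) (gvert G (idx 1 j 1)) $ 2"
    using cont[of "idx 0 j 0" 1 "gvert G (idx 1 j 1)" 2] cells vin unfolding u1 by simp
  have e2: "p (idx 0 j 0) (gvert G (idx 1 j 1)) $ 2 = p (idx 0 j 1) (gvert G (idx 1 j 1)) $ 2"
    using cont[of "idx 0 j 0" 3 "gvert G (idx 1 j 1)" 2] cells vin unfolding u3 by simp
  have e3: "p (idx 0 j 1) (gvert G (idx 1 j 1)) $ 2 = p (idx 1 j 1) (gvert G (idx 1 j 1)) $ 2"
    using cont[of "idx 0 j 1" 1 "gvert G (idx 1 j 1)" 2] cells vin unfolding u1 by simp
  obtain a b where ab: "a \<in> {0,1}" "b \<in> {0,1}" "nu = idx a j b" using nu unfolding Sj_eq by auto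
  show ?thesis using ab e1 e2 e3 by auto
qed

lemma hform:
  assumes j: "j \<le> 1" and nu: "nu \<in> Sj j"
  shows "hf j s nu y = (p (idx 0 j 0) (gvert G (idx 1 j 1)) $ 2 * N (G 1) (nu 1) 1 (y$1) * N (G 3) (nu 3) 1 (y$3)
     + (if j = 1 \<and> nu 3 = 1 then - (N (G 1) (nu 1) 1 (y$1) * N (G 3) (nu 3) 2 (y$3)) else 0))
     * (s * N (G 1) (nu 1) 1 (y$1) * N (G 3) (nu 3) 1 (y$3))"
proof -
  have nn: "nu = idx (nu 1) j (nu 3)" using Sj_idx[OF nu] .
  have b: "nu 1 \<le> 1" "nu 3 \<le> 1" using nu by (auto simp: Sj_def)
  have "p nu y $ 2 = p nu (gvert G (idx 1 j 1)) $ 2 * N (G 1) (nu 1) 1 (y$1) * N (G 3) (nu 3) 1 (y$3)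
    + (if j = 1 \<and> nu 3 = 1 then - (N (G 1) (nu 1) 1 (y$1) * N (G 3) (nu 3) 2 (y$3)) else 0)"
    using cell_formula[OF b(1) b(2) j, of y] nn by simp
  then show ?thesis unfolding hf_def center_const[OF j nu] by simp
qed

lemma key_sum: "j \<le> 1 \<Longrightarrow> (\<Sum>nu\<in>Sj j. integral (cbox (gvert G nu) (gvert G (upper_idx nu))) (hf j s nu)) = 0"
proof -
  assume j: "j \<le> 1"
  have "integral (gcell cb k0) (\<lambda>x. u x \<bullet> wf j s x) = 0" by (rule iii[OF k0_in in_NhT_w[OF j]])
  then show ?thesis using int_eq[OF j, of s] by simp
qed

lemma hf_cont: "j \<le> 1 \<Longrightarrow> nu \<in> Sj j \<Longrightarrow> continuous_on (cbox (gvert G nu) (gvert G (upper_idx nu))) (hf j s nu)"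
  unfolding hf_def by (intro continuous_intros cont_N ned_poly_cont2 poly_cell Sj_cell) auto

lemma main: "\<exists>nu \<in> cell_idx nfD. \<exists>x \<in> gcell_open G nu. curl3 u x \<noteq> 0"
proof (rule ccontr)
  assume "\<not> ?thesis"
  then have curl: "\<forall>nu \<in> cell_idx nfD. \<forall>x \<in> gcell_open G nu. curl3 u x = 0" by blast
  have bg: "gamma = - beta" using beta_gamma[OF curl] .
  have A0: "idx 0 0 0 \<in> Sj 0" "idx 0 1 1 \<in> Sj 1" by (auto simp: Sj_def)
  have C0: "idx 0 0 0 \<in> cell_idx nfD" "idx 0 1 1 \<in> cell_idx nfD" by (auto intro: idx_cell)
  show False
  proof (cases "beta = 0")
    case False
    have h: "hf 0 beta nu y = (beta * N (G 1) (nu 1) 1 (y$1) * N (G 3) (nu 3) 1 (y$3))^2" if "nu \<in> Sj 0" for nu y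
      using hform[of 0 nu beta y] that unfolding beta_def by (simp add: power2_eq_square)
    have "hf 0 beta (idx 0 0 0) (ctr (idx 0 0 0)) = 0"
    proof (rule sum_int_zero[OF Sj_finite hf_cont _ key_sum A0(1)])
      show "0 \<le> hf 0 beta nu x" if "nu \<in> Sj 0" for nu x using h[OF that] by simp
      show "box (gvert G (idx 0 0 0)) (gvert G (upper_idx (idx 0 0 0))) \<noteq> {}" using ctr_box[OF C0(1)] by blast
      show "ctr (idx 0 0 0) \<in> cbox (gvert G (idx 0 0 0)) (gvert G (upper_idx (idx 0 0 0)))"
        using ctr_box[OF C0(1)] box_subset_cbox by blast
    qed auto
    moreover have "hf 0 beta (idx 0 0 0) (ctr (idx 0 0 0)) = (beta / 4)^2"
    proof -
      have m1: "N (G 1) 0 1 ((G 1 0 + G 1 (Suc 0))/2) = 1/2" using N_mid[of 0 1 1] nfD_ge2[of 1] by simp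
      have m3: "N (G 3) 0 1 ((G 3 0 + G 3 (Suc 0))/2) = 1/2" using N_mid[of 0 3 1] nfD_ge2[of 3] by simp
      have "hf 0 beta (idx 0 0 0) (ctr (idx 0 0 0)) = (beta * N (G 1) 0 1 ((G 1 0 + G 1 (Suc 0))/2) * N (G 3) 0 1 ((G 3 0 + G 3 (Suc 0))/2))^2"
        using h[OF A0(1)] by (simp add: ctr_def)
      then show ?thesis unfolding m1 m3 by (simp add: power2_eq_square)
    qed
    ultimately show False using False by simp
  next
    case True
    then have g0: "gamma = 0" using bg by simp
    have h: "hf 1 (-1) nu y = (if nu 3 = 1 then N (G 1) (nu 1) 1 (y$1) * N (G 3) (nu 3) 2 (y$3) * N (G 1) (nu 1) 1 (y$1) * N (G 3) (nu 3) 1 (y$3) else 0)"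
      if "nu \<in> Sj 1" for nu y
      using hform[of 1 nu "-1" y] that g0 unfolding gamma_def by simp
    have "hf 1 (-1) (idx 0 1 1) (ctr (idx 0 1 1)) = 0"
    proof (rule sum_int_zero[OF Sj_finite hf_cont _ key_sum A0(2)])
      fix nu x assume nu: "nu \<in> Sj 1" and x: "x \<in> cbox (gvert G nu) (gvert G (upper_idx nu))"
      have c: "nu \<in> cell_idx nfD" using Sj_cell[of 1 nu] nu by simp
      have xg: "x \<in> gcell G nu" using x by (simp add: gcell_def)
      have nn: "0 \<le> N (G m) (nu m) a (x$m)" for m a
        using N_nonneg[OF _ cell_bounds(1)[OF xg] cell_bounds(2)[OF xg]] c by (simp add: cell_idx_def)
      have X: "0 \<le> N (G 1) (nu 1) 1 (x$1) * N (G 3) (nu 3) 2 (x$3) * N (G 1) (nu 1) 1 (x$1) * N (G 3) (nu 3) 1 (x$3)"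
        using nn[of 1 1] nn[of 3 2] nn[of 3 1] by (intro mult_nonneg_nonneg)
      show "0 \<le> hf 1 (-1) nu x"
      proof (cases "nu 3 = 1")
        case True show ?thesis unfolding h[OF nu] if_P[OF True] by (rule X)
      next
        case False show ?thesis unfolding h[OF nu] if_not_P[OF False] by simp
      qed
    next
      show "box (gvert G (idx 0 1 1)) (gvert G (upper_idx (idx 0 1 1))) \<noteq> {}" using ctr_box[OF C0(2)] by blast
      show "ctr (idx 0 1 1) \<in> cbox (gvert G (idx 0 1 1)) (gvert G (upper_idx (idx 0 1 1)))"
        using ctr_box[OF C0(2)] box_subset_cbox by blast
    qed auto
    moreover have "hf 1 (-1) (idx 0 1 1) (ctr (idx 0 1 1)) = 1/16"
    proof -
      have m1: "N (G 1) 0 1 ((G 1 0 + G 1 (Suc 0))/2) = 1/2" using N_mid[of 0 1 1] nfD_ge2[of 1] by simp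
      have m3: "N (G 3) 1 1 ((G 3 1 + G 3 (Suc 1))/2) = 1/2" using N_mid[of 1 3 1] nfD_ge2[of 3] by simp
      have m3': "N (G 3) 1 2 ((G 3 1 + G 3 (Suc 1))/2) = 1/2" using N_mid[of 1 3 2] nfD_ge2[of 3] by simp
      have "hf 1 (-1) (idx 0 1 1) (ctr (idx 0 1 1)) = N (G 1) 0 1 ((G 1 0 + G 1 (Suc 0))/2) * N (G 3) 1 2 ((G 3 1 + G 3 (Suc 1))/2)
          * N (G 1) 0 1 ((G 1 0 + G 1 (Suc 0))/2) * N (G 3) 1 1 ((G 3 1 + G 3 (Suc 1))/2)"
      proof -
        have c1: "ctr (idx 0 1 1) $ 1 = (G 1 0 + G 1 (Suc 0))/2" unfolding ctr_def by simp
        have c3: "ctr (idx 0 1 1) $ 3 = (G 3 1 + G 3 (Suc 1))/2" unfolding ctr_def by simp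
        have i3: "idx 0 1 1 3 = 1" "idx 0 1 1 1 = 0" by simp_all
        show ?thesis unfolding h[OF A0(2)] c1 c3 i3 if_P[OF refl] ..
      qed
      then show ?thesis unfolding m1 m3 m3' by simp
    qed
    ultimately show False by simp
  qed
qed

end

theorem lemma4p1:
  fixes cb :: "3 \<Rightarrow> nat \<Rightarrow> real"
    and pos :: "3 \<Rightarrow> bool"
    and u :: "real^3 \<Rightarrow> real^3"
    and p :: "(3 \<Rightarrow> nat) \<Rightarrow> real^3 \<Rightarrow> real^3"
  assumes mono: "\<And>m k. k < ncD m \<Longrightarrow> cb m k < cb m (Suc k)"
    and Nh: "ned_rep (\<lambda>m. refine (cb m)) nfD p u"
    and i_in: "\<And>i. tang_on_edge (\<lambda>m. refine (cb m)) nfD p (tdir pos i) (e_in pos i) (-1)"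
    and i_out: "\<And>i. tang_on_edge (\<lambda>m. refine (cb m)) nfD p (tdir pos i) (e_out pos i) 1"
    and ii: "\<And>e. e \<in> edge_idx nfD \<Longrightarrow> e \<notin> range (e_in pos) \<Longrightarrow> e \<notin> range (e_out pos) \<Longrightarrow>
              gedge (\<lambda>m. refine (cb m)) (fst e) (snd e)
                \<subseteq> (\<Union>kappa \<in> cell_idx ncD. frontier (gcell cb kappa)) \<Longrightarrow>
              tang_on_edge (\<lambda>m. refine (cb m)) nfD p (axis (snd e) 1) e 0"
    and iii: "\<And>kappa q w. kappa \<in> cell_idx ncD \<Longrightarrow> in_NhT cb nfD kappa q w \<Longrightarrow>
              integral (gcell cb kappa) (\<lambda>x. u x \<bullet> w x) = 0"
  shows "\<exists>nu \<in> cell_idx nfD. \<exists>x \<in> gcell_open (\<lambda>m. refine (cb m)) nu. curl3 u x \<noteq> 0"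
proof -
  have "L2 cb pos u p"
    unfolding L2_def L2_axioms_def L_def using mono Nh i_in i_out ii iii by blast
  then interpret L2 cb pos u p .
  show ?thesis by (rule main)
qed

end
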